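(* Let $X$ be a Banach lattice with order continuous norm, let $(S_\lambda)_{\lambda\in\Lambda}$ be a family of convex monotone semigroups on $X$, and let $T$ be a semigroup which is an upper bound of $(S_\lambda)_{\lambda\in\Lambda}$. Then the semigroup envelope $S$ of $(S_\lambda)_{\lambda\in\Lambda}$ exists and is given by $S(t)x=\sup_{\pi\in P_t}J_\pi x$ for all $t\ge0$, $x\in X$. If $T$ is a $C_0$-semigroup and $S_{\lambda_0}$ is a $C_0$-semigroup for some $\lambda_0\in\Lambda$, then $S$ is a $C_0$-semigroup.
   Context: A Banach lattice $X$ has order continuous norm if $\|x_\alpha\|\to 0$ for every net $x_\alpha\downarrow 0$ (then every nonempty subset bounded above has a supremum). An operator $T\colon X\to X$ is convex if $T(\lambda x+(1-\lambda)y)\le\lambda Tx+(1-\lambda)Ty$, monotone if $x\le y\Rightarrow Tx\le Ty$, bounded if $\sup_{\|x\|\le r}\|Tx\|<\infty$ for all $r>0$. A semigroup on $X$ is a family $(S(t))_{t\ge0}$ of bounded operators $X\to X$ with $S(0)=\mathrm{id}$ and $S(t+s)=S(t)S(s)$; it is a $C_0$-semigroup if additionally $S(t)x\to x$ as $t\downarrow0$ for all $x$; convex/monotone if every $S(t)$ is. For semigroups $S,T$ write $S\le T$ if $S(t)x\le T(t)x$ for all $t,x$. $T$ is an upper bound of $(S_\lambda)$ if $T\ge S_\lambda$ for all $\lambda$; the (upper) semigroup envelope is the smallest upper bound. Let $P$ be the set of finite $\pi\subset[0,\infty)$ with $0\in\pi$, $P_t:=\{\pi\in P:\max\pi=t\}$.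 Define $J_hx:=\sup_{\lambda\in\Lambda}S_\lambda(h)x$ for $h>0$ ($J_0=\mathrm{id}$) and for $\pi=\{t_0<\dots<t_m\}$, $t_0=0$, $J_\pi:=J_{t_1-t_0}\cdots J_{t_m-t_{m-1}}$. *)

theory Defs
  imports "HOL-Analysis.Analysis"
begin

definition lat_abs :: "'a::{ordered_real_vector, lattice} \<Rightarrow> 'a" where
  "lat_abs x = sup x (- x)"

definition banach_lattice :: "'a::{banach, ordered_real_vector, lattice} itself \<Rightarrow> bool" where
  "banach_lattice _ \<longleftrightarrow> (\<forall>x y::'a. lat_abs x \<le> lat_abs y \<longrightarrow> norm x \<le> norm y)"

definition is_sup :: "'a::order set \<Rightarrow> 'a \<Rightarrow> bool" where
  "is_sup A s \<longleftrightarrow> (\<forall>a\<in>A. a \<le> s) \<and> (\<forall>u. (\<forall>a\<in>A. a \<le> u) \<longrightarrow> s \<le> u)"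

text \<open>Order continuous norm: for every downward directed net (taken as a downward directed
set D, indexed by itself) decreasing to 0 (i.e. with infimum 0), the norms converge to 0.\<close>
definition order_continuous_norm :: "'a::{banach, ordered_real_vector, lattice} itself \<Rightarrow> bool" where
  "order_continuous_norm _ \<longleftrightarrow>
     (\<forall>D::'a set. D \<noteq> {} \<longrightarrow> (\<forall>x\<in>D. \<forall>y\<in>D. \<exists>z\<in>D. z \<le> x \<and> z \<le> y) \<longrightarrow>
        (\<forall>x\<in>D. 0 \<le> x) \<longrightarrow> (\<forall>u. (\<forall>x\<in>D. u \<le> x) \<longrightarrow> u \<le> 0) \<longrightarrow>
        (\<forall>e>0. \<exists>x0\<in>D. \<forall>x\<in>D. x \<le> x0 \<longrightarrow> norm x < e))"

definition convex_op :: "('a::{ordered_real_vector} \<Rightarrow> 'a) \<Rightarrow> bool" where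
  "convex_op T \<longleftrightarrow> (\<forall>x y. \<forall>l::real. 0 \<le> l \<and> l \<le> 1 \<longrightarrow>
      T (l *\<^sub>R x + (1 - l) *\<^sub>R y) \<le> l *\<^sub>R T x + (1 - l) *\<^sub>R T y)"

definition monotone_op :: "('a::order \<Rightarrow> 'a) \<Rightarrow> bool" where
  "monotone_op T \<longleftrightarrow> (\<forall>x y. x \<le> y \<longrightarrow> T x \<le> T y)"

definition bounded_op :: "('a::real_normed_vector \<Rightarrow> 'a) \<Rightarrow> bool" where
  "bounded_op T \<longleftrightarrow> (\<forall>r>0. \<exists>M. \<forall>x. norm x \<le> r \<longrightarrow> norm (T x) \<le> M)"

text \<open>Semigroups are indexed by real t; only t \<ge> 0 is meaningful.\<close>
definition semigroup :: "(real \<Rightarrow> 'a::real_normed_vector \<Rightarrow> 'a) \<Rightarrow> bool" where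
  "semigroup S \<longleftrightarrow> (\<forall>t\<ge>0. bounded_op (S t)) \<and> S 0 = id \<and>
     (\<forall>t\<ge>0. \<forall>s\<ge>0. S (t + s) = S t \<circ> S s)"

definition C0_semigroup :: "(real \<Rightarrow> 'a::real_normed_vector \<Rightarrow> 'a) \<Rightarrow> bool" where
  "C0_semigroup S \<longleftrightarrow> semigroup S \<and> (\<forall>x. ((\<lambda>t. S t x) \<longlongrightarrow> x) (at_right 0))"

definition convex_semigroup :: "(real \<Rightarrow> 'a::{real_normed_vector, ordered_real_vector} \<Rightarrow> 'a) \<Rightarrow> bool" where
  "convex_semigroup S \<longleftrightarrow> semigroup S \<and> (\<forall>t\<ge>0. convex_op (S t))"

definition monotone_semigroup :: "(real \<Rightarrow> 'a::{real_normed_vector, order} \<Rightarrow> 'a) \<Rightarrow> bool" where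
  "monotone_semigroup S \<longleftrightarrow> semigroup S \<and> (\<forall>t\<ge>0. monotone_op (S t))"

definition sg_le :: "(real \<Rightarrow> 'a::order \<Rightarrow> 'a) \<Rightarrow> (real \<Rightarrow> 'a \<Rightarrow> 'a) \<Rightarrow> bool" where
  "sg_le S T \<longleftrightarrow> (\<forall>t\<ge>0. \<forall>x. S t x \<le> T t x)"

definition upper_bound_sg ::
  "(real \<Rightarrow> 'a::{real_normed_vector, order} \<Rightarrow> 'a) \<Rightarrow> 'i set \<Rightarrow> ('i \<Rightarrow> real \<Rightarrow> 'a \<Rightarrow> 'a) \<Rightarrow> bool" where
  "upper_bound_sg T \<Lambda> Sl \<longleftrightarrow> semigroup T \<and> (\<forall>l\<in>\<Lambda>. sg_le (Sl l) T)"

definition semigroup_envelope ::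
  "(real \<Rightarrow> 'a::{real_normed_vector, order} \<Rightarrow> 'a) \<Rightarrow> 'i set \<Rightarrow> ('i \<Rightarrow> real \<Rightarrow> 'a \<Rightarrow> 'a) \<Rightarrow> bool" where
  "semigroup_envelope S \<Lambda> Sl \<longleftrightarrow> upper_bound_sg S \<Lambda> Sl \<and>
     (\<forall>T. upper_bound_sg T \<Lambda> Sl \<longrightarrow> sg_le S T)"

definition Jh :: "'i set \<Rightarrow> ('i \<Rightarrow> real \<Rightarrow> 'a::order \<Rightarrow> 'a) \<Rightarrow> real \<Rightarrow> 'a \<Rightarrow> 'a" where
  "Jh \<Lambda> Sl h x = (if h = 0 then x else (THE s. is_sup {Sl l h x | l. l \<in> \<Lambda>} s))"

fun Jlist :: "'i set \<Rightarrow> ('i \<Rightarrow> real \<Rightarrow> 'a::order \<Rightarrow> 'a) \<Rightarrow> real list \<Rightarrow> 'a \<Rightarrow> 'a" where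
  "Jlist \<Lambda> Sl (a # b # rest) = Jh \<Lambda> Sl (b - a) \<circ> Jlist \<Lambda> Sl (b # rest)"
| "Jlist \<Lambda> Sl _ = id"

definition Jpi :: "'i set \<Rightarrow> ('i \<Rightarrow> real \<Rightarrow> 'a::order \<Rightarrow> 'a) \<Rightarrow> real set \<Rightarrow> 'a \<Rightarrow> 'a" where
  "Jpi \<Lambda> Sl \<pi> = Jlist \<Lambda> Sl (sorted_list_of_set \<pi>)"

definition partitions :: "real \<Rightarrow> real set set" where
  "partitions t = {\<pi>. finite \<pi> \<and> 0 \<in> \<pi> \<and> \<pi> \<subseteq> {0..} \<and> Max \<pi> = t}"

end

theory Submission
  imports Defs
begin


lemma closed_approachable_iff: "(\<forall>x. (\<forall>e>0. \<exists>y\<in>S. dist y x < e) \<longrightarrow> x \<in> S) \<Longrightarrow> closed S"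
proof -
  assume H: "\<forall>x. (\<forall>e>0. \<exists>y\<in>S. dist y x < e) \<longrightarrow> x \<in> S"
  have "closure S \<subseteq> S"
  proof
    fix x assume "x \<in> closure S"
    then have "\<forall>e>0. \<exists>y\<in>S. dist y x < e" by (simp add: closure_approachable)
    then show "x \<in> S" using H by blast
  qed
  then show ?thesis by (simp add: closure_subset_eq)
qed

lemma two_nonneg_half:
  fixes s :: "'a::ordered_real_vector"
  assumes "0 \<le> s + s" shows "0 \<le> s"
proof -
  have "0 \<le> (1/2::real) *\<^sub>R (s + s)" by (rule scaleR_nonneg_nonneg) (simp_all add: assms)
  moreover have "s + s = (2::real) *\<^sub>R s" by (simp add: scaleR_2)
  then have e: "(1/2::real) *\<^sub>R (s + s) = s" by simp
  ultimately show ?thesis by (simp only: e)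
qed

lemma lat_abs_nonneg: "0 \<le> lat_abs (x::'a::{ordered_real_vector,lattice})"
proof -
  have "x + - x \<le> lat_abs x + lat_abs x"
    unfolding lat_abs_def by (rule add_mono) (rule sup_ge1, rule sup_ge2)
  then have "0 \<le> lat_abs x + lat_abs x" by (simp only: add.right_inverse)
  then show ?thesis by (rule two_nonneg_half)
qed

lemma lat_abs_pos: "0 \<le> (x::'a::{ordered_real_vector,lattice}) \<Longrightarrow> lat_abs x = x"
  unfolding lat_abs_def by (rule sup_absorb1) (meson neg_le_0_iff_le order.trans)

lemma lat_abs_minus: "lat_abs (- (x::'a::{ordered_real_vector,lattice})) = lat_abs x"
  unfolding lat_abs_def by (simp add: sup_commute)

lemma ge_lat_abs: "x \<le> lat_abs (x::'a::{ordered_real_vector,lattice})" "- x \<le> lat_abs x"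
  unfolding lat_abs_def by auto

lemma norm_lat_abs:
  assumes bl: "banach_lattice TYPE('a::{banach, ordered_real_vector, lattice})"
  shows "norm (lat_abs (x::'a)) = norm x"
proof -
  have "lat_abs (lat_abs x) = lat_abs x" by (simp add: lat_abs_pos lat_abs_nonneg)
  moreover from bl have *: "\<And>u v::'a. lat_abs u \<le> lat_abs v \<Longrightarrow> norm u \<le> norm v"
    unfolding banach_lattice_def by blast
  ultimately show ?thesis by (intro antisym *) simp_all
qed

lemma norm_mono_pos:
  assumes bl: "banach_lattice TYPE('a::{banach, ordered_real_vector, lattice})"
  shows "0 \<le> (x::'a) \<Longrightarrow> x \<le> y \<Longrightarrow> norm x \<le> norm y"
proof -
  assume a: "0 \<le> x" "x \<le> y"
  from bl have *: "\<And>u v::'a. lat_abs u \<le> lat_abs v \<Longrightarrow> norm u \<le> norm v"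
    unfolding banach_lattice_def by blast
  have "0 \<le> y" using a by (rule order.trans)
  then show ?thesis using a by (intro *) (simp add: lat_abs_pos)
qed

lemma norm_sandwich:
  assumes bl: "banach_lattice TYPE('a::{banach, ordered_real_vector, lattice})"
  and "(a::'a) \<le> s" "s \<le> b"
  shows "norm s \<le> norm a + norm b"
proof -
  have s1: "s \<le> lat_abs a + lat_abs b"
  proof -
    have "s \<le> lat_abs b" using assms(3) ge_lat_abs(1)[of b] by (rule order.trans)
    then show ?thesis using lat_abs_nonneg[of a] by (intro add_increasing)
  qed
  have s2: "- s \<le> lat_abs a + lat_abs b"
  proof -
    have "- s \<le> - a" using assms(2) by simp
    then have "- s \<le> lat_abs a" using ge_lat_abs(2)[of a] by (rule order.trans)
    then show ?thesis using lat_abs_nonneg[of b] by (intro add_increasing2)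
  qed
  have e: "lat_abs (lat_abs a + lat_abs b) = lat_abs a + lat_abs b"
    by (rule lat_abs_pos) (simp add: lat_abs_nonneg add_nonneg_nonneg)
  have "lat_abs s \<le> lat_abs (lat_abs a + lat_abs b)"
    unfolding e using s1 s2 by (simp add: lat_abs_def)
  then have "norm s \<le> norm (lat_abs a + lat_abs b)" using bl unfolding banach_lattice_def by blast
  also have "\<dots> \<le> norm (lat_abs a) + norm (lat_abs b)" by (rule norm_triangle_ineq)
  finally show ?thesis using norm_lat_abs[OF bl] by simp
qed

lemma nonneg_approx:
  assumes bl: "banach_lattice TYPE('a::{banach, ordered_real_vector, lattice})"
  and H: "\<forall>e>0. \<exists>y. 0 \<le> y \<and> norm ((x::'a) - y) < e"
  shows "0 \<le> x"
proof -
  have lt: "norm (inf x 0) < e" if "e > 0" for e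
  proof -
    obtain y where y: "0 \<le> y" "norm (x - y) < e" using H \<open>e>0\<close> by blast
    have "- lat_abs (x - y) \<le> x"
    proof -
      have "- lat_abs (x - y) \<le> x - y" using ge_lat_abs(2)[of "x - y"] by (simp add: minus_le_iff)
      also have "x - y \<le> x" using y(1) by simp
      finally show ?thesis .
    qed
    moreover have "- lat_abs (x - y) \<le> 0" using lat_abs_nonneg by simp
    ultimately have "- lat_abs (x - y) \<le> inf x 0" by simp
    then have "norm (inf x 0) \<le> norm (- lat_abs (x - y)) + norm (0::'a)"
      by (intro norm_sandwich[OF bl]) auto
    then show ?thesis using y norm_lat_abs[OF bl, of "x - y"] by simp
  qed
  then have "norm (inf x 0) = 0"
  proof -
    have "\<not> 0 < norm (inf x 0)"
    proof
      assume "0 < norm (inf x 0)"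
      then have "norm (inf x 0) < norm (inf x 0)" by (rule lt)
      then show False by simp
    qed
    then show ?thesis by simp
  qed
  then have "inf x 0 = 0" by simp
  then show ?thesis by (simp add: le_iff_inf inf_commute)
qed

lemma closed_nonneg:
  assumes bl: "banach_lattice TYPE('a::{banach, ordered_real_vector, lattice})"
  shows "closed {x::'a. 0 \<le> x}"
proof (rule closed_approachable_iff, intro allI impI)
  fix x :: 'a assume "\<forall>e>0. \<exists>y\<in>{x. 0 \<le> x}. dist y x < e"
  then have "\<forall>e>0. \<exists>y. 0 \<le> y \<and> norm (x - y) < e"
  proof (intro allI impI)
    fix e :: real assume "e > 0" "\<forall>e>0. \<exists>y\<in>{x. 0 \<le> x}. dist y x < e"
    then obtain y where y: "0 \<le> y" "dist y x < e" by blast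
    have "norm (x - y) = dist y x" by (simp add: dist_norm norm_minus_commute)
    then show "\<exists>y. 0 \<le> y \<and> norm (x - y) < e" using y by (intro exI[of _ y]) simp
  qed
  from nonneg_approx[OF bl this] show "x \<in> {x. 0 \<le> x}" by simp
qed

lemma le_lim:
  assumes bl: "banach_lattice TYPE('a::{banach, ordered_real_vector, lattice})"
  and "(f \<longlongrightarrow> (l::'a)) F" "(g \<longlongrightarrow> m) F" "F \<noteq> bot" "eventually (\<lambda>x. f x \<le> g x) F"
  shows "l \<le> m"
proof -
  have lim: "((\<lambda>x. g x - f x) \<longlongrightarrow> m - l) F" using assms by (intro tendsto_diff)
  have ev: "eventually (\<lambda>x. g x - f x \<in> {x. 0 \<le> x}) F" using assms(5) by (auto elim: eventually_mono)
  have "m - l \<in> {x. 0 \<le> x}" by (rule Lim_in_closed_set[OF closed_nonneg[OF bl] ev assms(4) lim])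
  then show ?thesis by simp
qed


lemma is_sup_unique: "is_sup A s \<Longrightarrow> is_sup A s' \<Longrightarrow> s = (s'::'a::order)"
  unfolding is_sup_def by (meson order.antisym)

lemma the_sup: "is_sup A s \<Longrightarrow> (THE s. is_sup A s) = (s::'a::order)"
proof -
  assume h: "is_sup A s"
  show ?thesis by (rule the_equality, rule h, rule is_sup_unique[OF _ h])
qed

definition directed :: "'a::order set \<Rightarrow> bool" where
  "directed A \<longleftrightarrow> (\<forall>a\<in>A. \<forall>b\<in>A. \<exists>c\<in>A. a \<le> c \<and> b \<le> c)"

lemma oc_core:
  fixes A :: "'a::{banach, ordered_real_vector, lattice} set"
  assumes bl: "banach_lattice TYPE('a)" and oc: "order_continuous_norm TYPE('a)"
    and ne: "A \<noteq> {}" and dir: "directed A" and bdd: "\<forall>a\<in>A. a \<le> u1" and e: "e > 0"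
  shows "\<exists>a0\<in>A. \<exists>u0. (\<forall>a\<in>A. a \<le> u0) \<and> norm (u0 - a0) < e"
proof -
  define U where "U = {u. \<forall>a\<in>A. a \<le> u}"
  define D where "D = {u - a | u a. u \<in> U \<and> a \<in> A}"
  have u1: "u1 \<in> U" using bdd unfolding U_def by blast
  obtain a1 where a1: "a1 \<in> A" using ne by blast
  have Dne: "D \<noteq> {}" using u1 a1 unfolding D_def by blast
  have Ddir: "\<forall>x\<in>D. \<forall>y\<in>D. \<exists>z\<in>D. z \<le> x \<and> z \<le> y"
  proof (intro ballI)
    fix x y assume "x \<in> D" "y \<in> D"
    then obtain u a u' a' where xy: "x = u - a" "y = u' - a'" "u \<in> U" "a \<in> A" "u' \<in> U" "a' \<in> A"
      unfolding D_def by blast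
    obtain c where c: "c \<in> A" "a \<le> c" "a' \<le> c" using dir xy unfolding directed_def by blast
    have iu: "inf u u' \<in> U" using xy unfolding U_def by (auto intro: le_infI)
    have "inf u u' - c \<le> u - a" by (rule diff_mono) (simp_all add: c)
    moreover have "inf u u' - c \<le> u' - a'" by (rule diff_mono) (simp_all add: c)
    moreover have "inf u u' - c \<in> D" using iu c unfolding D_def by blast
    ultimately show "\<exists>z\<in>D. z \<le> x \<and> z \<le> y" using xy by blast
  qed
  have Dpos: "\<forall>x\<in>D. 0 \<le> x" unfolding D_def U_def by auto
  have Dinf: "\<forall>w. (\<forall>x\<in>D. w \<le> x) \<longrightarrow> w \<le> 0"
  proof (intro allI impI)
    fix w assume W: "\<forall>x\<in>D. w \<le> x"
    have step: "v - w \<in> U" if "v \<in> U" for v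
      unfolding U_def
    proof (intro CollectI ballI)
      fix a assume "a \<in> A"
      then have "w \<le> v - a" using W that unfolding D_def by blast
      then show "a \<le> v - w" by (simp add: le_diff_eq add.commute)
    qed
    have iter: "u1 - real n *\<^sub>R w \<in> U" for n
    proof (induction n)
      case 0 then show ?case using u1 by simp
    next
      case (Suc n)
      have eq: "u1 - real (Suc n) *\<^sub>R w = (u1 - real n *\<^sub>R w) - w"
        by (simp add: scaleR_left_distrib algebra_simps)
      show ?case unfolding eq by (rule step[OF Suc.IH])
    qed
    define c where "c = u1 - a1"
    have nw: "real n *\<^sub>R w \<le> c" for n
    proof -
      have "a1 \<le> u1 - real n *\<^sub>R w" using iter[of n] a1 unfolding U_def by blast
      then show ?thesis unfolding c_def by (simp add: le_diff_eq add.commute)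
    qed
    have "0 \<le> - w"
    proof (rule nonneg_approx[OF bl], intro allI impI)
      fix e :: real assume "e > 0"
      obtain n :: nat where n: "norm c / e < real n" using reals_Archimedean2 by blast
      define k where "k = inverse (real (Suc n))"
      have k: "k > 0" unfolding k_def by simp
      have "k *\<^sub>R (real (Suc n) *\<^sub>R w) \<le> k *\<^sub>R c" using nw[of "Suc n"] k by (intro scaleR_left_mono) auto
      then have wle: "w \<le> k *\<^sub>R c" unfolding k_def by simp
      have "norm (- w - (k *\<^sub>R c - w)) = k * norm c" using k by simp
      also have "\<dots> < e"
      proof -
        have "norm c < e * real n" using n \<open>e>0\<close> by (simp add: divide_less_eq mult.commute)
        also have "\<dots> < e * real (Suc n)" using \<open>e>0\<close> by simp
        finally have "norm c < e * real (Suc n)" .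
        then show ?thesis unfolding k_def by (simp add: field_simps)
      qed
      finally show "\<exists>y. 0 \<le> y \<and> norm (- w - y) < e" using wle
        by (intro exI[of _ "k *\<^sub>R c - w"]) simp
    qed
    then show "w \<le> 0" by simp
  qed
  have "\<forall>e>0. \<exists>x0\<in>D. \<forall>x\<in>D. x \<le> x0 \<longrightarrow> norm x < e"
    using oc unfolding order_continuous_norm_def
    apply -
    apply (drule spec[of _ D])
    apply (drule mp[OF _ Dne])
    apply (drule mp[OF _ Ddir])
    apply (drule mp[OF _ Dpos])
    apply (drule mp[OF _ Dinf])
    apply assumption
    done
  then obtain x0 where x0: "x0 \<in> D" "\<forall>x\<in>D. x \<le> x0 \<longrightarrow> norm x < e"
    using e by blast
  then obtain u0 a0 where "x0 = u0 - a0" "u0 \<in> U" "a0 \<in> A" unfolding D_def by blast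
  moreover have "norm x0 < e" using x0 by blast
  ultimately show ?thesis unfolding U_def by blast
qed

lemma dir_sup_exists:
  fixes A :: "'a::{banach, ordered_real_vector, lattice} set"
  assumes bl: "banach_lattice TYPE('a)" and oc: "order_continuous_norm TYPE('a)"
    and ne: "A \<noteq> {}" and dir: "directed A" and bdd: "\<forall>a\<in>A. a \<le> u1"
  shows "\<exists>s. is_sup A s"
proof -
  have "\<forall>n::nat. \<exists>p. fst p \<in> A \<and> (\<forall>x\<in>A. x \<le> snd p) \<and> norm (snd p - fst p) < inverse (real (Suc n))"
  proof
    fix n :: nat
    have "inverse (real (Suc n)) > 0" by simp
    from oc_core[OF bl oc ne dir bdd this] obtain a0 u0 where
      "a0 \<in> A" "\<forall>x\<in>A. x \<le> u0" "norm (u0 - a0) < inverse (real (Suc n))" by blast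
    then show "\<exists>p. fst p \<in> A \<and> (\<forall>x\<in>A. x \<le> snd p) \<and> norm (snd p - fst p) < inverse (real (Suc n))"
      by (intro exI[of _ "(a0, u0)"]) simp
  qed
  from choice[OF this] obtain p where p: "\<And>n. fst (p n) \<in> A" "\<And>n. \<forall>x\<in>A. x \<le> snd (p n)"
    "\<And>n. norm (snd (p n) - fst (p n)) < inverse (real (Suc n))" by blast
  define a' where "a' n = fst (p n)" for n
  define u' where "u' n = snd (p n)" for n
  define a where "a = rec_nat (a' 0) (\<lambda>n an. SOME c. c \<in> A \<and> an \<le> c \<and> a' (Suc n) \<le> c)"
  define u where "u = rec_nat (u' 0) (\<lambda>n un. inf un (u' (Suc n)))"
  have a0: "a 0 = a' 0" unfolding a_def by simp
  have aS: "a (Suc n) = (SOME c. c \<in> A \<and> a n \<le> c \<and> a' (Suc n) \<le> c)" for n unfolding a_def by simp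
  have u0: "u 0 = u' 0" unfolding u_def by simp
  have uS: "u (Suc n) = inf (u n) (u' (Suc n))" for n unfolding u_def by simp
  have aA: "a n \<in> A \<and> a' n \<le> a n" for n
  proof (induction n)
    case 0 then show ?case using p(1) by (simp add: a0 a'_def)
  next
    case (Suc n)
    have "\<exists>c. c \<in> A \<and> a n \<le> c \<and> a' (Suc n) \<le> c"
      using dir Suc.IH p(1)[of "Suc n"] unfolding directed_def a'_def by blast
    from someI_ex[OF this] show ?case unfolding aS by blast
  qed
  have amono: "a n \<le> a (Suc n)" for n
  proof -
    have "\<exists>c. c \<in> A \<and> a n \<le> c \<and> a' (Suc n) \<le> c"
      using dir aA[of n] aA[of "Suc n"] p(1)[of "Suc n"] unfolding directed_def a'_def by blast
    from someI_ex[OF this] show ?thesis unfolding aS by blast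
  qed
  have uU: "(\<forall>x\<in>A. x \<le> u n) \<and> u n \<le> u' n" for n
  proof (induction n)
    case 0 then show ?case using p(2) by (simp add: u0 u'_def)
  next
    case (Suc n) then show ?case using p(2)[of "Suc n"] unfolding uS u'_def by (auto intro: le_infI2)
  qed
  have uanti: "u (Suc n) \<le> u n" for n unfolding uS by (rule inf_le1)
  have gap: "norm (u n - a n) < inverse (real (Suc n))" for n
  proof -
    have "0 \<le> u n - a n" using uU[of n] aA[of n] by simp
    moreover have "u n - a n \<le> u' n - a' n" using uU[of n] aA[of n] by (intro diff_mono) auto
    ultimately have "norm (u n - a n) \<le> norm (u' n - a' n)" by (rule norm_mono_pos[OF bl])
    then show ?thesis using p(3)[of n] unfolding a'_def u'_def by linarith
  qed
  have close: "norm (a m - a n) < inverse (real (Suc n))" if "n \<le> m" for n m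
  proof -
    have "a n \<le> a m" using lift_Suc_mono_le[of a, OF amono that] .
    then have "0 \<le> a m - a n" by simp
    moreover have "a m - a n \<le> u n - a n" using uU[of n] aA[of m] by (intro diff_mono) auto
    ultimately have "norm (a m - a n) \<le> norm (u n - a n)" by (rule norm_mono_pos[OF bl])
    then show ?thesis using gap[of n] by linarith
  qed
  have "Cauchy a"
  proof (rule CauchyI)
    fix e :: real assume "e > 0"
    then obtain M where M: "inverse (real (Suc M)) < e / 2" using reals_Archimedean[of "e/2"] by auto
    show "\<exists>M. \<forall>m\<ge>M. \<forall>n\<ge>M. norm (a m - a n) < e"
    proof (intro exI[of _ M] allI impI)
      fix m n assume "M \<le> m" "M \<le> n"
      have "norm (a m - a n) \<le> norm (a m - a M) + norm (a n - a M)"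
        using norm_triangle_ineq4[of "a m - a M" "a n - a M"] by simp
      also have "\<dots> < e" using close[OF \<open>M \<le> m\<close>] close[OF \<open>M \<le> n\<close>] M by linarith
      finally show "norm (a m - a n) < e" .
    qed
  qed
  then obtain s where lim: "a \<longlonglongrightarrow> s" using Cauchy_convergent convergent_def by blast
  have "(\<lambda>n. u n - a n) \<longlonglongrightarrow> 0"
  proof (rule Lim_null_comparison)
    show "\<forall>\<^sub>F n in sequentially. norm (u n - a n) \<le> inverse (real (Suc n))"
      using gap by (simp add: less_imp_le)
    show "(\<lambda>n. inverse (real (Suc n))) \<longlonglongrightarrow> 0" by (rule LIMSEQ_inverse_real_of_nat)
  qed
  from tendsto_add[OF lim this] have limu: "u \<longlonglongrightarrow> s" by simp
  have "is_sup A s"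
    unfolding is_sup_def
  proof (intro conjI ballI allI impI)
    fix x assume "x \<in> A"
    show "x \<le> s"
      by (rule le_lim[OF bl tendsto_const limu trivial_limit_sequentially]) (use uU \<open>x \<in> A\<close> in simp)
  next
    fix v assume "\<forall>x\<in>A. x \<le> v"
    then show "s \<le> v"
      by (intro le_lim[OF bl lim tendsto_const trivial_limit_sequentially]) (use aA in simp)
  qed
  then show ?thesis by blast
qed

lemma dir_sup_approx:
  fixes A :: "'a::{banach, ordered_real_vector, lattice} set"
  assumes bl: "banach_lattice TYPE('a)" and oc: "order_continuous_norm TYPE('a)"
    and ne: "A \<noteq> {}" and dir: "directed A" and s: "is_sup A s" and e: "e > 0"
  shows "\<exists>a\<in>A. norm (s - a) < e"
proof -
  have bdd: "\<forall>a\<in>A. a \<le> s" using s unfolding is_sup_def by blast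
  from oc_core[OF bl oc ne dir bdd e] obtain a0 u0 where
    a0: "a0 \<in> A" "\<forall>x\<in>A. x \<le> u0" "norm (u0 - a0) < e" by blast
  have "s \<le> u0" using s a0 unfolding is_sup_def by blast
  have "0 \<le> s - a0" using bdd a0 by simp
  moreover have "s - a0 \<le> u0 - a0" using \<open>s \<le> u0\<close> by simp
  ultimately have "norm (s - a0) \<le> norm (u0 - a0)" by (rule norm_mono_pos[OF bl])
  then show ?thesis using a0 by (intro bexI[of _ a0]) auto
qed

lemma sup_exists:
  fixes A :: "'a::{banach, ordered_real_vector, lattice} set"
  assumes bl: "banach_lattice TYPE('a)" and oc: "order_continuous_norm TYPE('a)"
    and ne: "A \<noteq> {}" and bdd: "\<forall>a\<in>A. a \<le> u1"
  shows "\<exists>s. is_sup A s"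
proof -
  define B where "B = {Sup_fin F | F. finite F \<and> F \<noteq> {} \<and> F \<subseteq> A}"
  have Bne: "B \<noteq> {}" using ne unfolding B_def by (auto intro!: exI[of _ "{SOME a. a \<in> A}"] some_in_eq[THEN iffD2])
  have Bdir: "directed B" unfolding directed_def
  proof (intro ballI)
    fix x y assume "x \<in> B" "y \<in> B"
    then obtain F G where FG: "x = Sup_fin F" "finite F" "F \<noteq> {}" "F \<subseteq> A"
      "y = Sup_fin G" "finite G" "G \<noteq> {}" "G \<subseteq> A" unfolding B_def by blast
    have "Sup_fin (F \<union> G) \<in> B" using FG unfolding B_def by blast
    moreover have "x \<le> Sup_fin (F \<union> G)" using FG by (auto intro!: Sup_fin.boundedI intro: Sup_fin.coboundedI simp: Sup_fin.bounded_iff)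
    moreover have "y \<le> Sup_fin (F \<union> G)" using FG by (auto intro!: Sup_fin.boundedI intro: Sup_fin.coboundedI simp: Sup_fin.bounded_iff)
    ultimately show "\<exists>z\<in>B. x \<le> z \<and> y \<le> z" by blast
  qed
  have Bbdd: "\<forall>b\<in>B. b \<le> u1" using bdd unfolding B_def by (auto intro!: Sup_fin.boundedI)
  obtain s where s: "is_sup B s" using dir_sup_exists[OF bl oc Bne Bdir Bbdd] by blast
  have "is_sup A s" unfolding is_sup_def
  proof (intro conjI ballI allI impI)
    fix a assume "a \<in> A"
    then have "Sup_fin {a} \<in> B" unfolding B_def by blast
    then show "a \<le> s" using s unfolding is_sup_def by simp
  next
    fix v assume "\<forall>a\<in>A. a \<le> v"
    then have "\<forall>b\<in>B. b \<le> v" unfolding B_def by (auto intro!: Sup_fin.boundedI)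
    then show "s \<le> v" using s unfolding is_sup_def by blast
  qed
  then show ?thesis by blast
qed


lemma convex_bounded_cont:
  fixes f :: "'a::{banach, ordered_real_vector, lattice} \<Rightarrow> 'a"
  assumes bl: "banach_lattice TYPE('a)" and cv: "convex_op f" and bd: "bounded_op f"
  shows "isCont f x"
proof -
  have "norm x + 2 > 0" by (simp add: add_nonneg_pos)
  then obtain M where M: "\<And>y. norm y \<le> norm x + 2 \<Longrightarrow> norm (f y) \<le> M"
    using bd unfolding bounded_op_def by blast
  have M0: "0 \<le> M" using M[of x] by (meson norm_ge_zero order.trans le_add_same_cancel1 zero_le_numeral)
  have cvx: "f (l *\<^sub>R u + (1 - l) *\<^sub>R v) \<le> l *\<^sub>R f u + (1 - l) *\<^sub>R f v" if "0 \<le> l" "l \<le> 1" for l u v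
    using cv that unfolding convex_op_def by blast
  have key: "norm (f y - f x) \<le> 4 * M * norm (y - x)" if "norm (y - x) < 1" "y \<noteq> x" for y
  proof -
    define d where "d = norm (y - x)"
    have d: "0 < d" "d < 1" using that unfolding d_def by auto
    define z where "z = x + (1/d) *\<^sub>R (y - x)"
    define z' where "z' = y - (1/d) *\<^sub>R (y - x)"
    have nyx: "norm ((1/d) *\<^sub>R (y - x)) = 1" using d unfolding d_def by simp
    have ny: "norm y \<le> norm x + 1"
      using norm_triangle_ineq2[of y x] that by linarith
    have nz: "norm z \<le> norm x + 2"
      using norm_triangle_ineq[of x "(1/d) *\<^sub>R (y - x)"] nyx unfolding z_def by linarith
    have nz': "norm z' \<le> norm x + 2"
      using norm_triangle_ineq4[of y "(1/d) *\<^sub>R (y - x)"] nyx ny unfolding z'_def by linarith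
    have ey: "y = (1 - d) *\<^sub>R x + (1 - (1 - d)) *\<^sub>R z"
      using d unfolding z_def by (simp add: algebra_simps)
    have ex: "x = (1 - d) *\<^sub>R y + (1 - (1 - d)) *\<^sub>R z'"
      using d unfolding z'_def by (simp add: algebra_simps)
    have "f y \<le> (1 - d) *\<^sub>R f x + (1 - (1 - d)) *\<^sub>R f z"
      using cvx[of "1 - d" x z] d ey by simp
    then have up: "f y - f x \<le> d *\<^sub>R (f z - f x)" by (simp add: algebra_simps)
    have "f x \<le> (1 - d) *\<^sub>R f y + (1 - (1 - d)) *\<^sub>R f z'"
      using cvx[of "1 - d" y z'] d ex by simp
    then have lo: "- (d *\<^sub>R (f z' - f y)) \<le> f y - f x" by (simp add: algebra_simps)
    have "norm (f y - f x) \<le> norm (- (d *\<^sub>R (f z' - f y))) + norm (d *\<^sub>R (f z - f x))"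
      by (rule norm_sandwich[OF bl lo up])
    also have "\<dots> = d * norm (f z' - f y) + d * norm (f z - f x)" using d by simp
    also have "\<dots> \<le> d * (2 * M) + d * (2 * M)"
    proof -
      have "norm (f z' - f y) \<le> 2 * M"
        using norm_triangle_ineq4[of "f z'" "f y"] M[OF nz'] M[of y] ny by linarith
      moreover have "norm (f z - f x) \<le> 2 * M"
        using norm_triangle_ineq4[of "f z" "f x"] M[OF nz] M[of x] by linarith
      ultimately show ?thesis using d by (intro add_mono mult_left_mono) auto
    qed
    finally show ?thesis unfolding d_def by (simp add: algebra_simps)
  qed
  show ?thesis unfolding continuous_at_eps_delta
  proof (intro allI impI)
    fix e :: real assume "e > 0"
    define dl where "dl = min (1/2) (e / (4 * M + 1))"
    have dl: "dl > 0" using \<open>e>0\<close> M0 unfolding dl_def by simp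
    show "\<exists>d>0. \<forall>y. dist y x < d \<longrightarrow> dist (f y) (f x) < e"
    proof (intro exI[of _ dl] conjI allI impI dl)
      fix y assume "dist y x < dl"
      then have n: "norm (y - x) < dl" by (simp add: dist_norm)
      show "dist (f y) (f x) < e"
      proof (cases "y = x")
        case True then show ?thesis using \<open>e>0\<close> by simp
      next
        case False
        have "norm (y - x) < 1" using n unfolding dl_def by simp
        from key[OF this False] have "norm (f y - f x) \<le> 4 * M * norm (y - x)" .
        also have "\<dots> \<le> 4 * M * dl" using n M0 by (intro mult_left_mono) auto
        also have "\<dots> < e"
        proof -
          have "dl \<le> e / (4 * M + 1)" unfolding dl_def by simp
          then have "(4 * M + 1) * dl \<le> e" using M0 by (simp add: field_simps)
          then show ?thesis using dl by (simp add: algebra_simps)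
        qed
        finally show ?thesis by (simp add: dist_norm)
      qed
    qed
  qed
qed


locale env =
  fixes Sl :: "'i \<Rightarrow> real \<Rightarrow> 'a::{banach, ordered_real_vector, lattice} \<Rightarrow> 'a"
    and \<Lambda> :: "'i set"
    and T :: "real \<Rightarrow> 'a \<Rightarrow> 'a"
  assumes bl: "banach_lattice TYPE('a)"
    and oc: "order_continuous_norm TYPE('a)"
    and ne: "\<Lambda> \<noteq> {}"
    and cm: "\<forall>l\<in>\<Lambda>. convex_semigroup (Sl l) \<and> monotone_semigroup (Sl l)"
    and ub: "upper_bound_sg T \<Lambda> Sl"
begin

abbreviation J where "J \<equiv> Jh \<Lambda> Sl"

lemma Sl_sg: "l \<in> \<Lambda> \<Longrightarrow> semigroup (Sl l)"
  using cm unfolding convex_semigroup_def by blast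

lemma Sl_0: "l \<in> \<Lambda> \<Longrightarrow> Sl l 0 = id"
  using Sl_sg unfolding semigroup_def by blast

lemma Sl_comp: "l \<in> \<Lambda> \<Longrightarrow> 0 \<le> t \<Longrightarrow> 0 \<le> s \<Longrightarrow> Sl l (t + s) x = Sl l t (Sl l s x)"
  using Sl_sg unfolding semigroup_def by (metis comp_apply)

lemma Sl_mono: "l \<in> \<Lambda> \<Longrightarrow> 0 \<le> t \<Longrightarrow> x \<le> y \<Longrightarrow> Sl l t x \<le> Sl l t y"
  using cm unfolding monotone_semigroup_def monotone_op_def by blast

lemma Sl_convex: "l \<in> \<Lambda> \<Longrightarrow> 0 \<le> t \<Longrightarrow> convex_op (Sl l t)"
  using cm unfolding convex_semigroup_def by blast

lemma Sl_bounded: "l \<in> \<Lambda> \<Longrightarrow> 0 \<le> t \<Longrightarrow> bounded_op (Sl l t)"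
  using Sl_sg unfolding semigroup_def by blast

lemma ub_le: "upper_bound_sg T' \<Lambda> Sl \<Longrightarrow> l \<in> \<Lambda> \<Longrightarrow> 0 \<le> t \<Longrightarrow> Sl l t x \<le> T' t x"
  unfolding upper_bound_sg_def sg_le_def by blast

lemma ub_sg: "upper_bound_sg T' \<Lambda> Sl \<Longrightarrow> semigroup T'"
  unfolding upper_bound_sg_def by blast

lemma sg_0: "semigroup T' \<Longrightarrow> T' 0 = id"
  unfolding semigroup_def by blast

lemma sg_comp: "semigroup T' \<Longrightarrow> 0 \<le> t \<Longrightarrow> 0 \<le> s \<Longrightarrow> T' (t + s) x = T' t (T' s x)"
  unfolding semigroup_def by (metis comp_apply)

lemma J_sup: "0 < h \<Longrightarrow> is_sup {Sl l h x | l. l \<in> \<Lambda>} (J h x)"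
proof -
  assume h: "0 < h"
  have n: "{Sl l h x | l. l \<in> \<Lambda>} \<noteq> {}" using ne by blast
  have b: "\<forall>a\<in>{Sl l h x | l. l \<in> \<Lambda>}. a \<le> T h x"
  proof
    fix a assume "a \<in> {Sl l h x | l. l \<in> \<Lambda>}"
    then obtain l where "a = Sl l h x" "l \<in> \<Lambda>" by blast
    then show "a \<le> T h x" using ub_le[OF ub \<open>l \<in> \<Lambda>\<close>] h by simp
  qed
  obtain s where s: "is_sup {Sl l h x | l. l \<in> \<Lambda>} s" using sup_exists[OF bl oc n b] by blast
  then have "J h x = s" unfolding Jh_def using h the_sup[OF s] by simp
  then show ?thesis using s by simp
qed

lemma J_0: "J 0 = id"
  by (rule ext) (simp add: Jh_def)

lemma Sl_le_J: "l \<in> \<Lambda> \<Longrightarrow> 0 \<le> h \<Longrightarrow> Sl l h x \<le> J h x"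
proof (cases "h = 0")
  case True
  assume "l \<in> \<Lambda>" then show ?thesis using True by (simp add: Sl_0 J_0)
next
  case False
  assume "l \<in> \<Lambda>" "0 \<le> h"
  then have "0 < h" using False by simp
  from J_sup[OF this, of x] show ?thesis using \<open>l \<in> \<Lambda>\<close> unfolding is_sup_def by blast
qed

lemma J_least: "0 < h \<Longrightarrow> (\<And>l. l \<in> \<Lambda> \<Longrightarrow> Sl l h x \<le> u) \<Longrightarrow> J h x \<le> u"
proof -
  assume h: "0 < h" and H: "\<And>l. l \<in> \<Lambda> \<Longrightarrow> Sl l h x \<le> u"
  from J_sup[OF h, of x] show ?thesis using H unfolding is_sup_def by blast
qed

lemma J_le_ub: "upper_bound_sg T' \<Lambda> Sl \<Longrightarrow> 0 \<le> h \<Longrightarrow> J h x \<le> T' h x"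
proof (cases "h = 0")
  case True
  assume "upper_bound_sg T' \<Lambda> Sl" then show ?thesis using True sg_0[OF ub_sg] by (simp add: J_0)
next
  case False
  assume u: "upper_bound_sg T' \<Lambda> Sl" and "0 \<le> h"
  then have "0 < h" using False by simp
  then show ?thesis by (rule J_least) (rule ub_le[OF u _ \<open>0 \<le> h\<close>])
qed

lemma J_mono: "0 \<le> h \<Longrightarrow> x \<le> y \<Longrightarrow> J h x \<le> J h y"
proof (cases "h = 0")
  case True
  assume "x \<le> y" then show ?thesis using True by (simp add: J_0)
next
  case False
  assume "0 \<le> h" "x \<le> y"
  then have h: "0 < h" using False by simp
  show ?thesis
  proof (rule J_least[OF h])
    fix l assume l: "l \<in> \<Lambda>"
    have "Sl l h x \<le> Sl l h y" using Sl_mono[OF l _ \<open>x \<le> y\<close>] h by simp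
    also have "\<dots> \<le> J h y" using Sl_le_J[OF l] h by simp
    finally show "Sl l h x \<le> J h y" .
  qed
qed

lemma J_convex: "0 \<le> h \<Longrightarrow> convex_op (J h)"
proof (cases "h = 0")
  case True
  then show ?thesis by (simp add: J_0 convex_op_def)
next
  case False
  assume "0 \<le> h"
  then have h: "0 < h" using False by simp
  show ?thesis unfolding convex_op_def
  proof (intro allI impI)
    fix x y and a :: real assume a: "0 \<le> a \<and> a \<le> 1"
    show "J h (a *\<^sub>R x + (1 - a) *\<^sub>R y) \<le> a *\<^sub>R J h x + (1 - a) *\<^sub>R J h y"
    proof (rule J_least[OF h])
      fix l assume l: "l \<in> \<Lambda>"
      have "Sl l h (a *\<^sub>R x + (1 - a) *\<^sub>R y) \<le> a *\<^sub>R Sl l h x + (1 - a) *\<^sub>R Sl l h y"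
        using Sl_convex[OF l] h a unfolding convex_op_def by simp
      also have "\<dots> \<le> a *\<^sub>R J h x + (1 - a) *\<^sub>R J h y"
        using a Sl_le_J[OF l, of h] h by (intro add_mono scaleR_left_mono) auto
      finally show "Sl l h (a *\<^sub>R x + (1 - a) *\<^sub>R y) \<le> a *\<^sub>R J h x + (1 - a) *\<^sub>R J h y" .
    qed
  qed
qed

lemma J_bounded: "0 \<le> h \<Longrightarrow> bounded_op (J h)"
proof -
  assume h: "0 \<le> h"
  obtain l0 where l0: "l0 \<in> \<Lambda>" using ne by blast
  have bT: "bounded_op (T h)" using ub_sg[OF ub] h unfolding semigroup_def by blast
  have bS: "bounded_op (Sl l0 h)" using Sl_bounded[OF l0 h] .
  show ?thesis unfolding bounded_op_def
  proof (intro allI impI)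
    fix r :: real assume r: "r > 0"
    obtain M1 where M1: "\<And>x. norm x \<le> r \<Longrightarrow> norm (T h x) \<le> M1" using bT r unfolding bounded_op_def by blast
    obtain M2 where M2: "\<And>x. norm x \<le> r \<Longrightarrow> norm (Sl l0 h x) \<le> M2" using bS r unfolding bounded_op_def by blast
    show "\<exists>M. \<forall>x. norm x \<le> r \<longrightarrow> norm (J h x) \<le> M"
    proof (intro exI[of _ "M2 + M1"] allI impI)
      fix x :: 'a assume "norm x \<le> r"
      have "norm (J h x) \<le> norm (Sl l0 h x) + norm (T h x)"
        by (rule norm_sandwich[OF bl Sl_le_J[OF l0 h] J_le_ub[OF ub h]])
      then show "norm (J h x) \<le> M2 + M1" using M1[OF \<open>norm x \<le> r\<close>] M2[OF \<open>norm x \<le> r\<close>] by linarith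
    qed
  qed
qed

lemma J_cont: "0 \<le> h \<Longrightarrow> isCont (J h) x"
  by (rule convex_bounded_cont[OF bl J_convex J_bounded])

lemma J_sub: "0 \<le> h \<Longrightarrow> 0 \<le> k \<Longrightarrow> J (h + k) x \<le> J h (J k x)"
proof -
  assume h: "0 \<le> h" and k: "0 \<le> k"
  show ?thesis
  proof (cases "h = 0 \<or> k = 0")
    case True
    then show ?thesis using h k by (auto simp: J_0)
  next
    case False
    then have hk: "0 < h + k" using h k by simp
    show ?thesis
    proof (rule J_least[OF hk])
      fix l assume l: "l \<in> \<Lambda>"
      have "Sl l (h + k) x = Sl l h (Sl l k x)" by (rule Sl_comp[OF l h k])
      also have "\<dots> \<le> Sl l h (J k x)" by (rule Sl_mono[OF l h Sl_le_J[OF l k]])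
      also have "\<dots> \<le> J h (J k x)" by (rule Sl_le_J[OF l h])
      finally show "Sl l (h + k) x \<le> J h (J k x)" .
    qed
  qed
qed

end


context env
begin

abbreviation JL where "JL \<equiv> Jlist \<Lambda> Sl"

lemma JL_Cons2: "JL (a # b # rest) x = J (b - a) (JL (b # rest) x)"
  by simp

lemma JL_single: "JL [a] = id"
  by simp

lemma JL_mono: "sorted L \<Longrightarrow> x \<le> y \<Longrightarrow> JL L x \<le> JL L y"
proof (induction L arbitrary: x y rule: induct_list012)
  case (3 a b rest)
  have s: "sorted (b # rest)" using "3.prems"(1) by simp
  have ab: "0 \<le> b - a" using "3.prems"(1) by simp
  show ?case using "3.IH"(2)[OF s "3.prems"(2)] J_mono[OF ab] by simp
qed auto

lemma JL_cont: "sorted L \<Longrightarrow> isCont (JL L) x"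
proof (induction L arbitrary: x rule: induct_list012)
  case (3 a b rest)
  have s: "sorted (b # rest)" using "3.prems"(1) by simp
  have ab: "0 \<le> b - a" using "3.prems"(1) by simp
  have "isCont (\<lambda>x. J (b - a) (JL (b # rest) x)) x"
    by (rule isCont_o2[OF "3.IH"(2)[OF s] J_cont[OF ab]])
  then show ?case by (simp add: o_def)
next
  case 1
  then show ?case by (simp add: id_def)
next
  case (2 v)
  then show ?case by (simp add: id_def)
qed

lemma sorted_last_ge: "sorted L \<Longrightarrow> x \<in> set L \<Longrightarrow> x \<le> last L"
  by (induction L) auto

lemma JL_le_ub: "upper_bound_sg T' \<Lambda> Sl \<Longrightarrow> sorted L \<Longrightarrow> L \<noteq> [] \<Longrightarrow> JL L x \<le> T' (last L - hd L) x"
proof (induction L arbitrary: x rule: induct_list012)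
  case (3 a b rest)
  have s: "sorted (b # rest)" using "3.prems"(2) by simp
  have ab: "0 \<le> b - a" using "3.prems"(2) by simp
  have lb: "0 \<le> last (b # rest) - b" using sorted_last_ge[OF s, of b] by simp
  have "JL (a # b # rest) x = J (b - a) (JL (b # rest) x)" by simp
  also have "\<dots> \<le> J (b - a) (T' (last (b # rest) - b) x)"
    using "3.IH"(2)[OF "3.prems"(1) s] by (intro J_mono[OF ab]) simp
  also have "\<dots> \<le> T' (b - a) (T' (last (b # rest) - b) x)"
    by (rule J_le_ub[OF "3.prems"(1) ab])
  also have "\<dots> = T' ((b - a) + (last (b # rest) - b)) x"
    by (rule sg_comp[OF ub_sg[OF "3.prems"(1)] ab lb, symmetric])
  finally show ?case by simp
next
  case 1
  then show ?case by simp
next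
  case (2 v)
  then show ?case using sg_0[OF ub_sg[OF "2.prems"(1)]] by simp
qed

lemma JL_insort: "sorted_wrt (<) L \<Longrightarrow> c \<notin> set L \<Longrightarrow> hd L < c \<Longrightarrow> c < last L \<Longrightarrow>
  JL L x \<le> JL (insort c L) x"
proof (induction L arbitrary: x rule: induct_list012)
  case (3 a b rest)
  have s: "sorted_wrt (<) (b # rest)" using "3.prems"(1) by simp
  have ab: "a < b" using "3.prems"(1) by simp
  have ac: "a < c" using "3.prems"(3) by simp
  show ?case
  proof (cases "c < b")
    case True
    have ins: "insort c (a # b # rest) = a # c # b # rest" using ac True by simp
    have "JL (a # b # rest) x = J ((c - a) + (b - c)) (JL (b # rest) x)" by simp
    also have "\<dots> \<le> J (c - a) (J (b - c) (JL (b # rest) x))"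
      by (rule J_sub) (use ac True in auto)
    also have "\<dots> = JL (insort c (a # b # rest)) x" unfolding ins by simp
    finally show ?thesis .
  next
    case False
    then have bc: "b < c" using "3.prems"(2) by (simp add: not_less order.order_iff_strict)
    have ins: "insort c (a # b # rest) = a # b # insort c rest" using ac bc by simp
    have ins2: "insort c (b # rest) = b # insort c rest" using bc by simp
    have IH: "JL (b # rest) x \<le> JL (insort c (b # rest)) x"
      using "3.IH"(2)[OF s] "3.prems"(2,4) bc by simp
    have "JL (a # b # rest) x = J (b - a) (JL (b # rest) x)" by simp
    also have "\<dots> \<le> J (b - a) (JL (insort c (b # rest)) x)"
      using ab IH by (intro J_mono) auto
    also have "\<dots> = JL (insort c (a # b # rest)) x" unfolding ins ins2 by simp
    finally show ?thesis .
  qed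
next
  case 1
  then show ?case by simp
next
  case (2 v)
  then show ?case by simp
qed

lemma JL_append: "JL (xs @ a # ys) = JL (xs @ [a]) \<circ> JL (a # ys)"
proof (induction xs)
  case Nil
  then show ?case by simp
next
  case (Cons x xs)
  show ?case
  proof (cases xs)
    case Nil
    then show ?thesis by (simp add: fun_eq_iff)
  next
    case (Cons y xs')
    then show ?thesis using Cons.IH by (simp add: fun_eq_iff)
  qed
qed

lemma JL_shift: "JL (map ((+) t) L) = JL L"
  by (induction L rule: induct_list012) (simp_all add: fun_eq_iff)

end


lemma part_basic:
  assumes "\<pi> \<in> partitions t"
  shows "finite \<pi>" "0 \<in> \<pi>" "\<pi> \<subseteq> {0..}" "Max \<pi> = t" "t \<in> \<pi>" "0 \<le> t" "\<And>x. x \<in> \<pi> \<Longrightarrow> 0 \<le> x \<and> x \<le> t"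
proof -
  show f: "finite \<pi>" and z: "0 \<in> \<pi>" and s: "\<pi> \<subseteq> {0..}" and m: "Max \<pi> = t"
    using assms unfolding partitions_def by auto
  show "t \<in> \<pi>" using Max_in[OF f] z m by blast
  then show "0 \<le> t" using s by auto
  show "\<And>x. x \<in> \<pi> \<Longrightarrow> 0 \<le> x \<and> x \<le> t" using s m Max_ge[OF f] by auto
qed

lemma partitionsI:
  assumes "finite \<pi>" "0 \<in> \<pi>" "t \<in> \<pi>" "\<And>x. x \<in> \<pi> \<Longrightarrow> 0 \<le> x \<and> x \<le> t"
  shows "\<pi> \<in> partitions t"
proof -
  have "Max \<pi> = t" using assms by (intro Max_eqI) auto
  then show ?thesis using assms unfolding partitions_def by auto
qed

lemma sorted_last_ge': "sorted L \<Longrightarrow> x \<in> set L \<Longrightarrow> x \<le> last L"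
  by (induction L) auto

lemma part_list:
  assumes "\<pi> \<in> partitions t"
  shows "sorted_wrt (<) (sorted_list_of_set \<pi>)" "set (sorted_list_of_set \<pi>) = \<pi>"
    "sorted_list_of_set \<pi> \<noteq> []" "hd (sorted_list_of_set \<pi>) = 0" "last (sorted_list_of_set \<pi>) = t"
    "sorted (sorted_list_of_set \<pi>)"
proof -
  note b = part_basic[OF assms]
  show s: "sorted_wrt (<) (sorted_list_of_set \<pi>)" by simp
  show st: "set (sorted_list_of_set \<pi>) = \<pi>" using b(1) by simp
  show ne: "sorted_list_of_set \<pi> \<noteq> []" using st b(2) by auto
  have "Min \<pi> = 0" using b by (intro Min_eqI) auto
  moreover have "\<pi> \<noteq> {}" using b(2) by blast
  ultimately show "hd (sorted_list_of_set \<pi>) = 0" using sorted_list_of_set_nonempty[OF b(1)] by simp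
  show so: "sorted (sorted_list_of_set \<pi>)" by simp
  have "last (sorted_list_of_set \<pi>) \<in> \<pi>" using st ne last_in_set by metis
  moreover have "x \<le> last (sorted_list_of_set \<pi>)" if "x \<in> \<pi>" for x
    using sorted_last_ge'[OF so] st that by blast
  ultimately have "Max \<pi> = last (sorted_list_of_set \<pi>)" using b(1) by (intro Max_eqI) auto
  then show "last (sorted_list_of_set \<pi>) = t" using b(4) by simp
qed

lemma partitions_0: "partitions 0 = {{0}}"
proof -
  have "\<pi> = {0}" if "\<pi> \<in> partitions 0" for \<pi> using part_basic[OF that] by force
  moreover have "{0} \<in> partitions 0" by (rule partitionsI) auto
  ultimately show ?thesis by blast
qed

lemma partitions_Un:
  assumes p: "\<pi> \<in> partitions t" and p': "\<pi>' \<in> partitions t"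
  shows "\<pi> \<union> \<pi>' \<in> partitions t"
proof -
  note b = part_basic[OF p] and b' = part_basic[OF p']
  show ?thesis by (rule partitionsI) (use b b' in auto)
qed

lemma partitions_2: "0 \<le> t \<Longrightarrow> {0, t} \<in> partitions t"
  by (rule partitionsI) auto

lemma partitions_split:
  assumes p: "\<pi> \<in> partitions (t + s)" and t: "t \<in> \<pi>" "0 \<le> t" and s: "0 \<le> s"
  shows "{x\<in>\<pi>. x \<le> t} \<in> partitions t" "(\<lambda>x. x - t) ` {x\<in>\<pi>. t \<le> x} \<in> partitions s"
    "\<pi> = {x\<in>\<pi>. x \<le> t} \<union> (+) t ` ((\<lambda>x. x - t) ` {x\<in>\<pi>. t \<le> x})"
proof -
  note b = part_basic[OF p]
  show "{x\<in>\<pi>. x \<le> t} \<in> partitions t" using b t by (intro partitionsI) auto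
  have "t + s - t \<in> (\<lambda>x. x - t) ` {x\<in>\<pi>. t \<le> x}" using b(5) s by (intro imageI) auto
  moreover have "t - t \<in> (\<lambda>x. x - t) ` {x\<in>\<pi>. t \<le> x}" using t by (intro imageI) auto
  ultimately show "(\<lambda>x. x - t) ` {x\<in>\<pi>. t \<le> x} \<in> partitions s" using b
    by (intro partitionsI) auto
  show "\<pi> = {x\<in>\<pi>. x \<le> t} \<union> (+) t ` ((\<lambda>x. x - t) ` {x\<in>\<pi>. t \<le> x})"
    by (auto simp: image_image image_iff)
qed

lemma partitions_insert:
  assumes p: "\<pi> \<in> partitions (t + s)" and t: "0 \<le> t" and s: "0 \<le> s"
  shows "insert t \<pi> \<in> partitions (t + s)"
proof -
  note b = part_basic[OF p]
  show ?thesis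
  proof (rule partitionsI)
    show "finite (insert t \<pi>)" using b(1) by simp
    show "0 \<in> insert t \<pi>" using b(2) by simp
    show "t + s \<in> insert t \<pi>" using b(5) by simp
    fix x assume "x \<in> insert t \<pi>"
    then show "0 \<le> x \<and> x \<le> t + s" using b(7)[of x] t s by auto
  qed
qed

lemma partitions_concat:
  assumes p1: "\<pi>1 \<in> partitions t" and p2: "\<pi>2 \<in> partitions s"
  shows "\<pi>1 \<union> (+) t ` \<pi>2 \<in> partitions (t + s)"
    "sorted_list_of_set (\<pi>1 \<union> (+) t ` \<pi>2) = sorted_list_of_set \<pi>1 @ map ((+) t) (tl (sorted_list_of_set \<pi>2))"
proof -
  note b1 = part_basic[OF p1] and b2 = part_basic[OF p2]
  show "\<pi>1 \<union> (+) t ` \<pi>2 \<in> partitions (t + s)"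
  proof (rule partitionsI)
    show "finite (\<pi>1 \<union> (+) t ` \<pi>2)" using b1(1) b2(1) by simp
    show "0 \<in> \<pi>1 \<union> (+) t ` \<pi>2" using b1(2) by simp
    have "t + s \<in> (+) t ` \<pi>2" using b2(5) by (rule imageI)
    then show "t + s \<in> \<pi>1 \<union> (+) t ` \<pi>2" by simp
    fix x assume "x \<in> \<pi>1 \<union> (+) t ` \<pi>2"
    then show "0 \<le> x \<and> x \<le> t + s"
    proof
      assume "x \<in> \<pi>1" then show ?thesis using b1(7)[of x] b2(6) by simp
    next
      assume "x \<in> (+) t ` \<pi>2"
      then obtain z where "z \<in> \<pi>2" "x = t + z" by blast
      then show ?thesis using b2(7)[of z] b1(6) by simp
    qed
  qed
  define L1 where "L1 = sorted_list_of_set \<pi>1"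
  define L2 where "L2 = sorted_list_of_set \<pi>2"
  note l1 = part_list[OF p1, folded L1_def] and l2 = part_list[OF p2, folded L2_def]
  have L2: "L2 = 0 # tl L2" using l2(3,4) by (cases L2) auto
  have st2: "sorted_wrt (<) (0 # tl L2)" using l2(1) L2 by simp
  then have tlpos: "\<forall>z\<in>set (tl L2). 0 < z" by simp
  have stl: "sorted_wrt (<) (tl L2)" using st2 by simp
  have "set L2 = insert 0 (set (tl L2))" using L2 by (metis list.simps(15))
  have sw: "sorted_wrt (<) (L1 @ map ((+) t) (tl L2))"
    unfolding sorted_wrt_append
  proof (intro conjI)
    show "sorted_wrt (<) L1" by (rule l1(1))
    show "sorted_wrt (<) (map ((+) t) (tl L2))" using stl by (simp add: sorted_wrt_map)
    show "\<forall>x\<in>set L1. \<forall>y\<in>set (map ((+) t) (tl L2)). x < y"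
      using b1(7) l1(2) tlpos by fastforce
  qed
  have "set (L1 @ map ((+) t) (tl L2)) = \<pi>1 \<union> (+) t ` \<pi>2"
  proof -
    have "set L2 = insert 0 (set (tl L2))" using L2 by (metis list.simps(15))
    then have "(+) t ` \<pi>2 = insert t ((+) t ` set (tl L2))" using l2(2) by auto
    then show ?thesis using l1(2) b1(5) by auto
  qed
  then have "sorted_list_of_set (\<pi>1 \<union> (+) t ` \<pi>2) = sorted_list_of_set (set (L1 @ map ((+) t) (tl L2)))"
    by simp
  also have "\<dots> = L1 @ map ((+) t) (tl L2)"
    using sw by (intro sorted_list_of_set.idem_if_sorted_distinct) (auto simp: strict_sorted_iff)
  finally show "sorted_list_of_set (\<pi>1 \<union> (+) t ` \<pi>2) = sorted_list_of_set \<pi>1 @ map ((+) t) (tl (sorted_list_of_set \<pi>2))"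
    unfolding L1_def L2_def .
qed

context env
begin

lemma Jpi_mono: "\<pi> \<in> partitions t \<Longrightarrow> x \<le> y \<Longrightarrow> Jpi \<Lambda> Sl \<pi> x \<le> Jpi \<Lambda> Sl \<pi> y"
  unfolding Jpi_def by (rule JL_mono[OF part_list(6)])

lemma Jpi_cont: "\<pi> \<in> partitions t \<Longrightarrow> isCont (Jpi \<Lambda> Sl \<pi>) x"
  unfolding Jpi_def by (rule JL_cont[OF part_list(6)])

lemma Jpi_le_ub: "upper_bound_sg T' \<Lambda> Sl \<Longrightarrow> \<pi> \<in> partitions t \<Longrightarrow> Jpi \<Lambda> Sl \<pi> x \<le> T' t x"
  unfolding Jpi_def using JL_le_ub[OF _ part_list(6) part_list(3)] part_list(4,5) by fastforce

lemma Jpi_2: "0 \<le> t \<Longrightarrow> Jpi \<Lambda> Sl {0, t} = J t"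
proof (cases "t = 0")
  case True then show ?thesis by (simp add: Jpi_def J_0)
next
  case False
  assume "0 \<le> t"
  then have "0 < t" using False by simp
  then have "sorted_list_of_set (set [0, t]) = [0, t]"
    by (intro sorted_list_of_set.idem_if_sorted_distinct) auto
  then have "sorted_list_of_set {0, t} = [0, t]" by simp
  then show ?thesis unfolding Jpi_def by (simp add: fun_eq_iff)
qed

lemma Jpi_refine_aux:
  assumes p: "\<pi> \<in> partitions t" and F: "finite F" "F \<subseteq> {0<..<t}"
  shows "\<pi> \<union> F \<in> partitions t \<and> Jpi \<Lambda> Sl \<pi> x \<le> Jpi \<Lambda> Sl (\<pi> \<union> F) x"
  using F
proof (induction F rule: finite_induct)
  case empty then show ?case using p by simp
next
  case (insert c F)
  then have IH: "\<pi> \<union> F \<in> partitions t" "Jpi \<Lambda> Sl \<pi> x \<le> Jpi \<Lambda> Sl (\<pi> \<union> F) x" by auto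
  have c: "0 < c" "c < t" using insert.prems by auto
  show ?case
  proof (cases "c \<in> \<pi> \<union> F")
    case True
    then have "\<pi> \<union> insert c F = \<pi> \<union> F" by auto
    then show ?thesis using IH by simp
  next
    case False
    note bb = part_basic[OF IH(1)]
    have mem: "\<pi> \<union> insert c F \<in> partitions t"
      using bb c by (intro partitionsI) auto
    have eq: "sorted_list_of_set (\<pi> \<union> insert c F) = insort c (sorted_list_of_set (\<pi> \<union> F))"
      using False bb(1) by (simp add: sorted_list_of_set_insert)
    note l = part_list[OF IH(1)]
    have "Jpi \<Lambda> Sl (\<pi> \<union> F) x \<le> Jpi \<Lambda> Sl (\<pi> \<union> insert c F) x"
      unfolding Jpi_def eq
      by (rule JL_insort) (use l False c in auto)
    then show ?thesis using IH(2) mem by (blast intro: order.trans)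
  qed
qed

lemma Jpi_refine:
  assumes p: "\<pi> \<in> partitions t" and p': "\<pi>' \<in> partitions t" and sub: "\<pi> \<subseteq> \<pi>'"
  shows "Jpi \<Lambda> Sl \<pi> x \<le> Jpi \<Lambda> Sl \<pi>' x"
proof -
  note b = part_basic[OF p] and b' = part_basic[OF p']
  have F: "finite (\<pi>' - \<pi>)" "\<pi>' - \<pi> \<subseteq> {0<..<t}"
    using b b' by (auto simp: less_le)
  have "\<pi> \<union> (\<pi>' - \<pi>) = \<pi>'" using sub by auto
  then show ?thesis using Jpi_refine_aux[OF p F, of x] by simp
qed

lemma Jpi_concat:
  assumes p1: "\<pi>1 \<in> partitions t" and p2: "\<pi>2 \<in> partitions s"
  shows "Jpi \<Lambda> Sl (\<pi>1 \<union> (+) t ` \<pi>2) x = Jpi \<Lambda> Sl \<pi>1 (Jpi \<Lambda> Sl \<pi>2 x)"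
proof -
  define L1 where "L1 = sorted_list_of_set \<pi>1"
  define L2 where "L2 = sorted_list_of_set \<pi>2"
  note l1 = part_list[OF p1, folded L1_def] and l2 = part_list[OF p2, folded L2_def]
  have L2: "L2 = 0 # tl L2" using l2(3,4) by (cases L2) auto
  have L1: "L1 = butlast L1 @ [t]" using l1(3,5) by (metis append_butlast_last_id)
  have "Jpi \<Lambda> Sl (\<pi>1 \<union> (+) t ` \<pi>2) = JL (L1 @ map ((+) t) (tl L2))"
    unfolding Jpi_def partitions_concat(2)[OF p1 p2] L1_def L2_def ..
  also have "L1 @ map ((+) t) (tl L2) = butlast L1 @ t # map ((+) t) (tl L2)"
    by (subst L1) simp
  also have "JL \<dots> = JL (butlast L1 @ [t]) \<circ> JL (t # map ((+) t) (tl L2))"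
    by (rule JL_append)
  also have "t # map ((+) t) (tl L2) = map ((+) t) L2" by (subst L2) simp
  also have "JL (map ((+) t) L2) = JL L2" by (rule JL_shift)
  finally show ?thesis using L1 unfolding Jpi_def L1_def L2_def by simp
qed

end


context env
begin

definition Senv :: "real \<Rightarrow> 'a \<Rightarrow> 'a" where
  "Senv t x = (THE s. is_sup {Jpi \<Lambda> Sl \<pi> x | \<pi>. \<pi> \<in> partitions t} s)"

lemma JA_ne: "0 \<le> t \<Longrightarrow> {Jpi \<Lambda> Sl \<pi> x | \<pi>. \<pi> \<in> partitions t} \<noteq> {}"
  using partitions_2 by blast

lemma JA_dir: "directed {Jpi \<Lambda> Sl \<pi> x | \<pi>. \<pi> \<in> partitions t}"
  unfolding directed_def
proof (intro ballI)
  fix a b assume "a \<in> {Jpi \<Lambda> Sl \<pi> x | \<pi>. \<pi> \<in> partitions t}" "b \<in> {Jpi \<Lambda> Sl \<pi> x | \<pi>. \<pi> \<in> partitions t}"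
  then obtain \<pi> \<pi>' where p: "a = Jpi \<Lambda> Sl \<pi> x" "\<pi> \<in> partitions t" "b = Jpi \<Lambda> Sl \<pi>' x" "\<pi>' \<in> partitions t"
    by blast
  have u: "\<pi> \<union> \<pi>' \<in> partitions t" using partitions_Un[OF p(2) p(4)] .
  have "a \<le> Jpi \<Lambda> Sl (\<pi> \<union> \<pi>') x" unfolding p(1) by (rule Jpi_refine[OF p(2) u]) simp
  moreover have "b \<le> Jpi \<Lambda> Sl (\<pi> \<union> \<pi>') x" unfolding p(3) by (rule Jpi_refine[OF p(4) u]) simp
  ultimately show "\<exists>c\<in>{Jpi \<Lambda> Sl \<pi> x | \<pi>. \<pi> \<in> partitions t}. a \<le> c \<and> b \<le> c" using u by blast
qed

lemma S_sup: "0 \<le> t \<Longrightarrow> is_sup {Jpi \<Lambda> Sl \<pi> x | \<pi>. \<pi> \<in> partitions t} (Senv t x)"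
proof -
  assume t: "0 \<le> t"
  have b: "\<forall>a\<in>{Jpi \<Lambda> Sl \<pi> x | \<pi>. \<pi> \<in> partitions t}. a \<le> T t x"
  proof
    fix a assume "a \<in> {Jpi \<Lambda> Sl \<pi> x | \<pi>. \<pi> \<in> partitions t}"
    then obtain \<pi> where "a = Jpi \<Lambda> Sl \<pi> x" "\<pi> \<in> partitions t" by blast
    then show "a \<le> T t x" using Jpi_le_ub[OF ub] by simp
  qed
  obtain s where s: "is_sup {Jpi \<Lambda> Sl \<pi> x | \<pi>. \<pi> \<in> partitions t} s"
    using sup_exists[OF bl oc JA_ne[OF t] b] by blast
  then show ?thesis unfolding Senv_def using the_sup[OF s] by simp
qed

lemma S_ge: "\<pi> \<in> partitions t \<Longrightarrow> Jpi \<Lambda> Sl \<pi> x \<le> Senv t x"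
proof -
  assume p: "\<pi> \<in> partitions t"
  have "0 \<le> t" using part_basic(6)[OF p] .
  from S_sup[OF this, of x] show ?thesis using p unfolding is_sup_def by blast
qed

lemma S_least: "0 \<le> t \<Longrightarrow> (\<And>\<pi>. \<pi> \<in> partitions t \<Longrightarrow> Jpi \<Lambda> Sl \<pi> x \<le> u) \<Longrightarrow> Senv t x \<le> u"
proof -
  assume t: "0 \<le> t" and H: "\<And>\<pi>. \<pi> \<in> partitions t \<Longrightarrow> Jpi \<Lambda> Sl \<pi> x \<le> u"
  from S_sup[OF t, of x] show ?thesis using H unfolding is_sup_def by blast
qed

lemma J_le_S: "0 \<le> t \<Longrightarrow> J t x \<le> Senv t x"
  using S_ge[OF partitions_2] Jpi_2 by metis

lemma S_le_ub: "upper_bound_sg T' \<Lambda> Sl \<Longrightarrow> 0 \<le> t \<Longrightarrow> Senv t x \<le> T' t x"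
proof -
  assume u: "upper_bound_sg T' \<Lambda> Sl" and t: "0 \<le> t"
  show ?thesis by (rule S_least[OF t]) (rule Jpi_le_ub[OF u])
qed

lemma S_0: "Senv 0 = id"
proof (rule ext)
  fix x
  have "{Jpi \<Lambda> Sl \<pi> x | \<pi>. \<pi> \<in> partitions 0} = {x}"
    unfolding partitions_0 by (simp add: Jpi_def)
  then have "is_sup {x} (Senv 0 x)" using S_sup[of 0 x] by simp
  moreover have "is_sup {x} x" unfolding is_sup_def by simp
  ultimately show "Senv 0 x = id x" using is_sup_unique by simp
qed

lemma Sl_le_S: "l \<in> \<Lambda> \<Longrightarrow> 0 \<le> t \<Longrightarrow> Sl l t x \<le> Senv t x"
  using Sl_le_J J_le_S order.trans by metis

lemma S_bounded: "0 \<le> t \<Longrightarrow> bounded_op (Senv t)"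
proof -
  assume h: "0 \<le> t"
  obtain l0 where l0: "l0 \<in> \<Lambda>" using ne by blast
  have bT: "bounded_op (T t)" using ub_sg[OF ub] h unfolding semigroup_def by blast
  have bS: "bounded_op (Sl l0 t)" using Sl_bounded[OF l0 h] .
  show ?thesis unfolding bounded_op_def
  proof (intro allI impI)
    fix r :: real assume r: "r > 0"
    obtain M1 where M1: "\<And>x. norm x \<le> r \<Longrightarrow> norm (T t x) \<le> M1" using bT r unfolding bounded_op_def by blast
    obtain M2 where M2: "\<And>x. norm x \<le> r \<Longrightarrow> norm (Sl l0 t x) \<le> M2" using bS r unfolding bounded_op_def by blast
    show "\<exists>M. \<forall>x. norm x \<le> r \<longrightarrow> norm (Senv t x) \<le> M"
    proof (intro exI[of _ "M2 + M1"] allI impI)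
      fix x :: 'a assume "norm x \<le> r"
      have "norm (Senv t x) \<le> norm (Sl l0 t x) + norm (T t x)"
        by (rule norm_sandwich[OF bl Sl_le_S[OF l0 h] S_le_ub[OF ub h]])
      then show "norm (Senv t x) \<le> M2 + M1" using M1[OF \<open>norm x \<le> r\<close>] M2[OF \<open>norm x \<le> r\<close>] by linarith
    qed
  qed
qed

lemma S_comp_le: "0 \<le> t \<Longrightarrow> 0 \<le> s \<Longrightarrow> Senv (t + s) x \<le> Senv t (Senv s x)"
proof -
  assume t: "0 \<le> t" and s: "0 \<le> s"
  show ?thesis
  proof (rule S_least)
    show "0 \<le> t + s" using t s by simp
    fix \<pi> assume p: "\<pi> \<in> partitions (t + s)"
    have p': "insert t \<pi> \<in> partitions (t + s)" by (rule partitions_insert[OF p t s])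
    have "Jpi \<Lambda> Sl \<pi> x \<le> Jpi \<Lambda> Sl (insert t \<pi>) x" by (rule Jpi_refine[OF p p']) auto
    also have "insert t \<pi> = {x\<in>insert t \<pi>. x \<le> t} \<union> (+) t ` ((\<lambda>x. x - t) ` {x\<in>insert t \<pi>. t \<le> x})"
      by (rule partitions_split(3)[OF p' _ t s]) simp
    also have "Jpi \<Lambda> Sl \<dots> x = Jpi \<Lambda> Sl {x\<in>insert t \<pi>. x \<le> t} (Jpi \<Lambda> Sl ((\<lambda>x. x - t) ` {x\<in>insert t \<pi>. t \<le> x}) x)"
      by (rule Jpi_concat[OF partitions_split(1)[OF p' _ t s] partitions_split(2)[OF p' _ t s]]) simp_all
    also have "\<dots> \<le> Jpi \<Lambda> Sl {x\<in>insert t \<pi>. x \<le> t} (Senv s x)"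
      by (rule Jpi_mono[OF partitions_split(1)[OF p' _ t s] S_ge[OF partitions_split(2)[OF p' _ t s]]]) simp_all
    also have "\<dots> \<le> Senv t (Senv s x)"
      by (rule S_ge[OF partitions_split(1)[OF p' _ t s]]) simp
    finally show "Jpi \<Lambda> Sl \<pi> x \<le> Senv t (Senv s x)" .
  qed
qed

lemma S_comp_ge: "0 \<le> t \<Longrightarrow> 0 \<le> s \<Longrightarrow> Senv t (Senv s x) \<le> Senv (t + s) x"
proof -
  assume t: "0 \<le> t" and s: "0 \<le> s"
  show ?thesis
  proof (rule S_least[OF t])
    fix \<pi>1 assume p1: "\<pi>1 \<in> partitions t"
    define U where "U = Senv (t + s) x"
    define y where "y = Senv s x"
    define f where "f = Jpi \<Lambda> Sl \<pi>1"
    have fc: "isCont f y" unfolding f_def by (rule Jpi_cont[OF p1])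
    have "0 \<le> U - f y"
    proof (rule nonneg_approx[OF bl], intro allI impI)
      fix e :: real assume e: "e > 0"
      obtain d where d: "d > 0" "\<And>z. dist z y < d \<Longrightarrow> dist (f z) (f y) < e"
        using fc e unfolding continuous_at_eps_delta by blast
      obtain a where a: "a \<in> {Jpi \<Lambda> Sl \<pi> x | \<pi>. \<pi> \<in> partitions s}" "norm (y - a) < d"
        using dir_sup_approx[OF bl oc JA_ne[OF s] JA_dir S_sup[OF s] d(1)] unfolding y_def by blast
      then obtain \<pi>2 where p2: "\<pi>2 \<in> partitions s" "a = Jpi \<Lambda> Sl \<pi>2 x" by blast
      have "f a = Jpi \<Lambda> Sl (\<pi>1 \<union> (+) t ` \<pi>2) x" unfolding f_def p2(2) by (rule Jpi_concat[OF p1 p2(1), symmetric])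
      also have "\<dots> \<le> U" unfolding U_def by (rule S_ge[OF partitions_concat(1)[OF p1 p2(1)]])
      finally have fa: "f a \<le> U" .
      have "dist (f a) (f y) < e" using d(2)[of a] a(2) by (simp add: dist_norm norm_minus_commute)
      then have "norm (U - f y - (U - f a)) < e" by (simp add: dist_norm)
      then show "\<exists>z. 0 \<le> z \<and> norm (U - f y - z) < e" using fa by (intro exI[of _ "U - f a"]) simp
    qed
    then show "Jpi \<Lambda> Sl \<pi>1 (Senv s x) \<le> Senv (t + s) x" unfolding U_def f_def y_def by simp
  qed
qed

lemma S_semigroup: "semigroup Senv"
  unfolding semigroup_def
proof (intro conjI allI impI)
  show "\<And>t. 0 \<le> t \<Longrightarrow> bounded_op (Senv t)" by (rule S_bounded)
  show "Senv 0 = id" by (rule S_0)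
  fix t s :: real assume "0 \<le> t" "0 \<le> s"
  show "Senv (t + s) = Senv t \<circ> Senv s"
    using S_comp_le[OF \<open>0 \<le> t\<close> \<open>0 \<le> s\<close>] S_comp_ge[OF \<open>0 \<le> t\<close> \<open>0 \<le> s\<close>]
    by (intro ext) (simp add: order.antisym)
qed

lemma S_envelope: "semigroup_envelope Senv \<Lambda> Sl"
  unfolding semigroup_envelope_def
proof (intro conjI allI impI)
  show "upper_bound_sg Senv \<Lambda> Sl"
    unfolding upper_bound_sg_def sg_le_def using S_semigroup Sl_le_S by blast
  fix T' assume u: "upper_bound_sg T' \<Lambda> Sl"
  show "sg_le Senv T'" unfolding sg_le_def using S_le_ub[OF u] by blast
qed

lemma S_C0:
  assumes cT: "C0_semigroup T" and l0: "l0 \<in> \<Lambda>" and cS: "C0_semigroup (Sl l0)"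
  shows "C0_semigroup Senv"
  unfolding C0_semigroup_def
proof (intro conjI allI)
  show "semigroup Senv" by (rule S_semigroup)
  fix x
  have lT: "((\<lambda>t. T t x) \<longlongrightarrow> x) (at_right 0)" using cT unfolding C0_semigroup_def by blast
  have lS: "((\<lambda>t. Sl l0 t x) \<longlongrightarrow> x) (at_right 0)" using cS unfolding C0_semigroup_def by blast
  have g: "((\<lambda>t. norm (Sl l0 t x - x) + norm (T t x - x)) \<longlongrightarrow> 0) (at_right 0)"
    using tendsto_add[OF tendsto_norm_zero[OF LIM_zero[OF lS]] tendsto_norm_zero[OF LIM_zero[OF lT]]] by simp
  have ev: "\<forall>\<^sub>F t in at_right (0::real). norm (Senv t x - x) \<le> norm (Sl l0 t x - x) + norm (T t x - x)"
  proof -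
    have "\<forall>\<^sub>F t in at_right (0::real). 0 < t" by (rule eventually_at_right_less)
    then show ?thesis
    proof (rule eventually_mono)
      fix t :: real assume "0 < t"
      then have t: "0 \<le> t" by simp
      show "norm (Senv t x - x) \<le> norm (Sl l0 t x - x) + norm (T t x - x)"
        by (rule norm_sandwich[OF bl]) (simp_all add: Sl_le_S[OF l0 t] S_le_ub[OF ub t])
    qed
  qed
  have "((\<lambda>t. Senv t x - x) \<longlongrightarrow> 0) (at_right 0)" by (rule Lim_null_comparison[OF ev g])
  then show "((\<lambda>t. Senv t x) \<longlongrightarrow> x) (at_right 0)" by (rule LIM_zero_cancel)
qed

end

theorem corollary4p4:
  fixes Sl :: "'i \<Rightarrow> real \<Rightarrow> 'a::{banach, ordered_real_vector, lattice} \<Rightarrow> 'a"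
    and \<Lambda> :: "'i set"
    and T :: "real \<Rightarrow> 'a \<Rightarrow> 'a"
  assumes "banach_lattice TYPE('a)"
    and "order_continuous_norm TYPE('a)"
    and "\<Lambda> \<noteq> {}"
    and "\<forall>l\<in>\<Lambda>. convex_semigroup (Sl l) \<and> monotone_semigroup (Sl l)"
    and "upper_bound_sg T \<Lambda> Sl"
  shows "\<exists>S. semigroup_envelope S \<Lambda> Sl
           \<and> (\<forall>t\<ge>0. \<forall>x. is_sup {Jpi \<Lambda> Sl \<pi> x | \<pi>. \<pi> \<in> partitions t} (S t x))
           \<and> ((C0_semigroup T \<and> (\<exists>l0\<in>\<Lambda>. C0_semigroup (Sl l0))) \<longrightarrow> C0_semigroup S)"
proof -
  interpret env Sl \<Lambda> T using assms by (rule env.intro)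
  show ?thesis
    using S_envelope S_sup S_C0 by blast
qed

end
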